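(* Let $n \geq 1$ and $g \in G_n$, and for $\alpha$ coprime to $\mathrm{ord}(g)$ let $S_{g,\alpha} = \{h \in G_n : hgh^{-1} = g^{\alpha}\}$. (i) If $q_n(g) = 0$ and $g \ne \mathrm{id}$, then $\mathrm{ord}(g)=3$ and $S_{g,\alpha} = G_n$ if $\alpha \equiv 1 \bmod 3$, $S_{g,\alpha}=\varnothing$ otherwise. (ii) If $q_n(g) \neq 0$, then $S_{g,\alpha} = \varnothing$ unless $\alpha \equiv 1 \bmod \mathrm{ord}(g)$, and the centralizer $S_{g,1}$ of $g$ has size $3\cdot 9^n$ if $\pi_0(q_n(g)) \neq 0$; size $27^n$ if $\pi_0(q_n(g)) = 0$ and $\pi_i(q_n(g)) \neq 0$ for some $1\le i\le n$; and size $3 \cdot 27^n$ if $\pi_0(q_n(g)) = 0$ and $\pi_i(q_n(g)) = 0$ for all $1 \le i \le n$.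
   Context: Let $A_n = \mathbb{Z}/3\mathbb{Z} \oplus (\mathbb{Z}/9\mathbb{Z})^n$, $\pi_0: A_n \to \mathbb{Z}/3\mathbb{Z}$ the projection onto the first factor, and for $1\le i\le n$, $\pi_i: A_n \to \mathbb{Z}/3\mathbb{Z}$ the projection onto the $i$-th copy of $\mathbb{Z}/9\mathbb{Z}$ followed by reduction mod $3$. Let $\theta(a,b) = (\pi_0(a)\pi_i(b))_{1\le i\le n}$. $G_n$ is the set $(\mathbb{Z}/3\mathbb{Z})^n \times A_n$ with multiplication $(c_1,a_1)(c_2,a_2) = (c_1+c_2+\theta(a_1,a_2), a_1+a_2)$, and $q_n: G_n \to A_n$ is the projection to the second coordinate. *)

theory Defs
  imports "HOL-Algebra.Algebra"
begin

text \<open>An element is a triple (c, a0, a):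
  c :: nat => int encodes the (Z/3Z)^n coordinate (entries c i in {0,1,2} for 1 <= i <= n, 0 elsewhere);
  (a0, a) encodes the element of A_n = Z/3Z + (Z/9Z)^n, with a0 in {0,1,2} and
  a i in {0..8} for 1 <= i <= n, 0 elsewhere.\<close>

type_synonym gelem = "(nat \<Rightarrow> int) \<times> int \<times> (nat \<Rightarrow> int)"

definition An_carrier :: "nat \<Rightarrow> (int \<times> (nat \<Rightarrow> int)) set" where
  "An_carrier n = {(a0, a). a0 \<in> {0..2} \<and>
      (\<forall>i. a i \<in> (if i \<in> {1..n} then {0..8} else {0}))}"

definition An_add :: "nat \<Rightarrow> int \<times> (nat \<Rightarrow> int) \<Rightarrow> int \<times> (nat \<Rightarrow> int) \<Rightarrow> int \<times> (nat \<Rightarrow> int)" where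
  "An_add n x y = ((fst x + fst y) mod 3,
      (\<lambda>i. if i \<in> {1..n} then (snd x i + snd y i) mod 9 else 0))"

definition pi0 :: "int \<times> (nat \<Rightarrow> int) \<Rightarrow> int" where
  "pi0 x = fst x mod 3"

definition pii :: "nat \<Rightarrow> int \<times> (nat \<Rightarrow> int) \<Rightarrow> int" where
  "pii i x = snd x i mod 3"

definition theta :: "nat \<Rightarrow> int \<times> (nat \<Rightarrow> int) \<Rightarrow> int \<times> (nat \<Rightarrow> int) \<Rightarrow> (nat \<Rightarrow> int)" where
  "theta n x y = (\<lambda>i. if i \<in> {1..n} then (pi0 x * pii i y) mod 3 else 0)"

definition Gn :: "nat \<Rightarrow> gelem monoid" where
  "Gn n = \<lparr> carrier = {(c, a). (\<forall>i. c i \<in> (if i \<in> {1..n} then {0..2} else {0})) \<and> a \<in> An_carrier n},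
           monoid.mult = (\<lambda>(c1, a1) (c2, a2).
                    ((\<lambda>i. if i \<in> {1..n} then (c1 i + c2 i + theta n a1 a2 i) mod 3 else 0),
                     An_add n a1 a2)),
           monoid.one = ((\<lambda>_. 0), 0, (\<lambda>_. 0)) \<rparr>"

definition qn :: "gelem \<Rightarrow> int \<times> (nat \<Rightarrow> int)" where
  "qn g = snd g"

definition An_zero :: "int \<times> (nat \<Rightarrow> int)" where
  "An_zero = (0, (\<lambda>_. 0))"

definition Sset :: "nat \<Rightarrow> gelem \<Rightarrow> int \<Rightarrow> gelem set" where
  "Sset n g \<alpha> = {h \<in> carrier (Gn n).
      h \<otimes>\<^bsub>Gn n\<^esub> g \<otimes>\<^bsub>Gn n\<^esub> inv\<^bsub>Gn n\<^esub> h = g [^]\<^bsub>Gn n\<^esub> \<alpha>}"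

end

theory Submission
  imports Defs
begin


lemma m3: "(x::int) mod 3 = x - 3 * (x div 3)" by (metis minus_div_mult_eq_mod mult.commute)

lemma assoc_arith: "((c1 + c2 + t12) mod 3 + c3 + (t13 + t23) mod 3) mod 3 = (c1 + (c2 + c3 + t23) mod 3 + (t12 + t13) mod (3::int)) mod 3"
proof -
  obtain p q r s :: int where e: "(c1 + c2 + t12) mod 3 = c1 + c2 + t12 - 3*p" "(t13 + t23) mod 3 = t13 + t23 - 3*q"
      "(c2 + c3 + t23) mod 3 = c2 + c3 + t23 - 3*r" "(t12 + t13) mod 3 = t12 + t13 - 3*s" using m3 by blast
  have e1: "(c1 + c2 + t12) mod 3 + c3 + (t13 + t23) mod 3 = (c1 + c2 + c3 + t12 + t13 + t23) + (-p-q)*3"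
    unfolding e by (simp add: algebra_simps)
  have e2: "c1 + (c2 + c3 + t23) mod 3 + (t12 + t13) mod 3 = (c1 + c2 + c3 + t12 + t13 + t23) + (-r-s)*3"
    unfolding e by (simp add: algebra_simps)
  show ?thesis unfolding e1 e2 mod_mult_self1 ..
qed

lemma inv_arith: "((- (c::int) - t) mod 3 + c + t) mod 3 = 0"
proof -
  obtain p :: int where e: "(- c - t) mod 3 = - c - t - 3*p" using m3 by blast
  have "(- c - t) mod 3 + c + t = 0 + (-p)*3" unfolding e by (simp add: algebra_simps)
  then show ?thesis by (simp only: mod_mult_self1) simp
qed

lemma cube_arith: "((c + c + t mod 3) mod 3 + c + (2 * t) mod 3) mod 3 = (0::int)"
proof -
  obtain p :: int where e1: "t mod 3 = t - 3*p" using m3 by blast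
  obtain q :: int where e2: "(c + c + t mod 3) mod 3 = c + c + t mod 3 - 3*q" using m3 by blast
  obtain r :: int where e3: "(2 * t) mod 3 = 2 * t - 3*r" using m3 by blast
  have "(c + c + t mod 3) mod 3 + c + (2 * t) mod 3 = 0 + (c + t - p - q - r)*3" unfolding e2 e3 unfolding e1 by (simp add: algebra_simps)
  then show ?thesis by (simp only: mod_mult_self1) simp
qed

lemma res3: "(x::int) mod 3 = 0 \<or> x mod 3 = 1 \<or> x mod 3 = 2"
proof -
  have "0 \<le> x mod 3" "x mod 3 < 3" by simp_all
  then show ?thesis by linarith
qed

lemma res3': "(x::int) mod 3 \<in> {0,1,2}" using res3[of x] by auto

lemma enum3a: "s \<in> {0,1,2} \<Longrightarrow> t1 \<in> {0,1,2} \<Longrightarrow> t2 \<in> {0,1,2} \<Longrightarrow> ((s + t1) mod 3 = (s + t2) mod (3::int)) = (t1 = t2)"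
  by auto

lemma enum3b: "a \<in> {0,1,2} \<Longrightarrow> u \<in> {0,1,2} \<Longrightarrow> (a = (2 * u) mod 3) = (u = (a * 2) mod (3::int))"
  by auto

lemma comm_arith: "0 \<le> t1 \<Longrightarrow> t1 < 3 \<Longrightarrow> 0 \<le> t2 \<Longrightarrow> t2 < 3 \<Longrightarrow>
   ((x::int) + y + t1) mod 3 = (y + x + t2) mod 3 \<longleftrightarrow> t1 = t2"
proof -
  assume a: "0 \<le> t1" "t1 < 3" "0 \<le> t2" "t2 < 3"
  have e1: "((x::int) + y + t1) mod 3 = ((x + y) mod 3 + t1) mod 3" by (simp add: mod_simps)
  have e2: "(y + x + t2) mod 3 = ((x + y) mod 3 + t2) mod 3" by (simp add: mod_simps add.commute)
  have "t1 \<in> {0,1,2}" "t2 \<in> {0,1,2}" using a by auto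
  then show ?thesis unfolding e1 e2 using enum3a[OF res3'[of "x + y"]] by blast
qed

lemma cond_iff: "g0 = 1 \<or> g0 = 2 \<Longrightarrow> ((A::int) mod 3 = (g0 * x) mod 3) = (x mod 3 = (A * g0) mod 3)"
proof -
  assume g: "g0 = 1 \<or> g0 = 2"
  have e1: "(2 * x) mod 3 = (2 * (x mod 3)) mod 3" by (simp add: mod_mult_right_eq)
  have e2: "(A * 2) mod 3 = ((A mod 3) * 2) mod 3" by (simp add: mod_mult_left_eq)
  have e3: "(A mod 3 = (2 * (x mod 3)) mod 3) = (x mod 3 = ((A mod 3) * 2) mod 3)"
    using enum3b[OF res3'[of A] res3'[of x]] .
  show ?thesis
  proof (cases "g0 = 1")
    case True then show ?thesis by auto
  next
    case False then have "g0 = 2" using g by simp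
    then show ?thesis using e3 by (simp only: e1 e2)
  qed
qed

lemma nonzero_prod: "a0 \<in> {0..2::int} \<Longrightarrow> a0 \<noteq> 0 \<Longrightarrow> x mod 3 \<noteq> 0 \<Longrightarrow> (a0 * x) mod 3 \<noteq> 0"
proof -
  assume a: "a0 \<in> {0..2::int}" "a0 \<noteq> 0" "x mod 3 \<noteq> 0"
  then have "a0 = 1 \<or> a0 = 2" by auto
  moreover have "(a0 * x) mod 3 = (a0 * (x mod 3)) mod 3" by (simp add: mod_mult_right_eq)
  moreover have "x mod 3 \<in> {1,2}" using a(3) res3[of x] by auto
  ultimately show ?thesis by auto
qed

lemma dvd3: "(int 3 dvd (a::int) - 1) = (a mod 3 = 1)"
  using mod_eq_dvd_iff[of a 3 1] by simp

lemma card_mod3: "card {x \<in> {0..8::int}. x mod 3 = t mod 3} = 3"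
proof -
  let ?r = "t mod 3"
  have r: "0 \<le> ?r" "?r < 3" by simp_all
  have "{x \<in> {0..8::int}. x mod 3 = ?r} = (\<lambda>k. ?r + 3 * k) ` {0..2}"
  proof (rule subset_antisym; rule subsetI)
    fix x assume x: "x \<in> {x \<in> {0..8::int}. x mod 3 = ?r}"
    have d: "x = 3 * (x div 3) + x mod 3" by simp
    have "x div 3 \<in> {0..2}" using x r d by auto
    moreover have "x = ?r + 3 * (x div 3)" using x d by simp
    ultimately show "x \<in> (\<lambda>k. ?r + 3 * k) ` {0..2}" by blast
  next
    fix x assume "x \<in> (\<lambda>k. ?r + 3 * k) ` {0..2}"
    then obtain k where k: "k \<in> {0..2}" "x = ?r + 3 * k" by blast
    have "x mod 3 = ?r" using k(2) by simp
    moreover have "x \<in> {0..8}" using k r by auto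
    ultimately show "x \<in> {x \<in> {0..8::int}. x mod 3 = ?r}" by simp
  qed
  moreover have "inj_on (\<lambda>k. ?r + 3 * k) {0..2}" by (auto simp: inj_on_def)
  ultimately show ?thesis by (simp add: card_image)
qed

lemma r9: "r < (9::nat) \<Longrightarrow> r = 0 \<or> r = 1 \<or> r = 2 \<or> r = 3 \<or> r = 4 \<or> r = 5 \<or> r = 6 \<or> r = 7 \<or> r = 8" by arith
lemma x9: "0 \<le> x \<Longrightarrow> x \<le> (8::int) \<Longrightarrow> x = 0 \<or> x = 1 \<or> x = 2 \<or> x = 3 \<or> x = 4 \<or> x = 5 \<or> x = 6 \<or> x = 7 \<or> x = 8" by arith

lemma arith9: "0 \<le> x \<Longrightarrow> x \<le> 8 \<Longrightarrow> (3*x) mod 9 \<noteq> (0::int) \<Longrightarrow> r < (9::nat) \<Longrightarrow> (int r * x) mod 9 = x \<Longrightarrow> r = 1"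
proof -
  assume a: "0 \<le> x" "x \<le> 8" "(3*x) mod 9 \<noteq> (0::int)" "r < 9" "(int r * x) mod 9 = x"
  have "r = 0 \<or> r = 1 \<or> r = 2 \<or> r = 3 \<or> r = 4 \<or> r = 5 \<or> r = 6 \<or> r = 7 \<or> r = 8" using r9 a(4) by blast
  moreover have "x = 0 \<or> x = 1 \<or> x = 2 \<or> x = 3 \<or> x = 4 \<or> x = 5 \<or> x = 6 \<or> x = 7 \<or> x = 8" using x9 a(1,2) by blast
  ultimately show ?thesis using a(3,5) by (elim disjE; simp)
qed

lemma arith3a: "0 \<le> x \<Longrightarrow> x \<le> 8 \<Longrightarrow> x \<noteq> 0 \<Longrightarrow> r < (3::nat) \<Longrightarrow> (int r * x) mod 9 = x \<Longrightarrow> r = 1"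
proof -
  assume a: "0 \<le> x" "x \<le> 8" "x \<noteq> 0" "r < 3" "(int r * x) mod 9 = x"
  have "r = 0 \<or> r = 1 \<or> r = 2" using a(4) by arith
  moreover have "x = 0 \<or> x = 1 \<or> x = 2 \<or> x = 3 \<or> x = 4 \<or> x = 5 \<or> x = 6 \<or> x = 7 \<or> x = 8" using x9 a(1,2) by blast
  ultimately show ?thesis using a(3,5) by (elim disjE; simp)
qed

lemma arith3b: "0 \<le> x \<Longrightarrow> x \<le> 2 \<Longrightarrow> x \<noteq> 0 \<Longrightarrow> r < (3::nat) \<Longrightarrow> (int r * x) mod 3 = x \<Longrightarrow> r = 1"
proof -
  assume a: "0 \<le> x" "x \<le> 2" "x \<noteq> 0" "r < 3" "(int r * x) mod 3 = x"
  have "r = 0 \<or> r = 1 \<or> r = 2" using a(4) by arith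
  moreover have "x = 1 \<or> x = 2" using a(1,2,3) by arith
  ultimately show ?thesis using a(5) by (elim disjE; simp)
qed

lemma zero_prod: "x mod 3 = 0 \<Longrightarrow> ((a0::int) * x) mod 3 = 0"
  by (simp add: mod_mult_right_eq[symmetric])



lemma Gn_mult: "(c1,a1) \<otimes>\<^bsub>Gn n\<^esub> (c2,a2) =
   ((\<lambda>i. if i \<in> {1..n} then (c1 i + c2 i + theta n a1 a2 i) mod 3 else 0), An_add n a1 a2)"
  by (simp add: Gn_def)

lemma Gn_one: "\<one>\<^bsub>Gn n\<^esub> = ((\<lambda>_. 0), 0, (\<lambda>_. 0))" by (simp add: Gn_def)

lemma Gn_carrier: "(c,a0,a) \<in> carrier (Gn n) \<longleftrightarrow>
   (\<forall>i. c i \<in> (if i \<in> {1..n} then {0..2} else {0})) \<and> a0 \<in> {0..2} \<and>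
      (\<forall>i. a i \<in> (if i \<in> {1..n} then {0..8} else {0}))"
  by (simp add: Gn_def An_carrier_def)

lemma An_add_assoc: "An_add n (An_add n x y) z = An_add n x (An_add n y z)"
  by (auto simp: An_add_def mod_simps add.assoc)

lemma An_add_comm: "An_add n x y = An_add n y x"
  by (auto simp: An_add_def add.commute)

lemma mod93: "(x::int) mod 9 mod 3 = x mod 3"
  by (simp add: mod_mod_cancel)

lemma mod93m: "((a::int) * (b mod 9)) mod 3 = (a*b) mod 3"
  by (metis mod93 mod_mult_right_eq)

lemma theta_eq: "i \<in> {1..n} \<Longrightarrow> theta n x y i = (fst x * snd y i) mod 3"
  by (simp add: theta_def pi0_def pii_def mod_mult_eq)

lemma theta_add1: "i \<in> {1..n} \<Longrightarrow> theta n (An_add n x y) z i = (theta n x z i + theta n y z i) mod 3"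
  by (simp add: theta_eq An_add_def mod_simps algebra_simps)

lemma theta_add2: "i \<in> {1..n} \<Longrightarrow> theta n x (An_add n y z) i = (theta n x y i + theta n x z i) mod 3"
  by (simp add: theta_eq An_add_def mod93m mod_simps algebra_simps)

lemma Gn_assoc: "(x \<otimes>\<^bsub>Gn n\<^esub> y) \<otimes>\<^bsub>Gn n\<^esub> z = x \<otimes>\<^bsub>Gn n\<^esub> (y \<otimes>\<^bsub>Gn n\<^esub> z)"
proof -
  obtain c1 a1 c2 a2 c3 a3 where e: "x = (c1,a1)" "y = (c2,a2)" "z=(c3,a3)" by (metis prod.exhaust)
  have "(\<lambda>i. if i \<in> {1..n} then ((if i \<in> {1..n} then (c1 i + c2 i + theta n a1 a2 i) mod 3 else 0) + c3 i + theta n (An_add n a1 a2) a3 i) mod 3 else 0)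
      = (\<lambda>i. if i \<in> {1..n} then (c1 i + (if i \<in> {1..n} then (c2 i + c3 i + theta n a2 a3 i) mod 3 else 0) + theta n a1 (An_add n a2 a3) i) mod 3 else 0)"
  proof
    fix i show "(if i \<in> {1..n} then ((if i \<in> {1..n} then (c1 i + c2 i + theta n a1 a2 i) mod 3 else 0) + c3 i + theta n (An_add n a1 a2) a3 i) mod 3 else 0)
      = (if i \<in> {1..n} then (c1 i + (if i \<in> {1..n} then (c2 i + c3 i + theta n a2 a3 i) mod 3 else 0) + theta n a1 (An_add n a2 a3) i) mod 3 else 0)"
    proof (cases "i \<in> {1..n}")
      case True
      then show ?thesis by (simp only: if_True theta_add1[OF True] theta_add2[OF True] assoc_arith)
    next
      case False
      then show ?thesis by (simp only: if_False)
    qed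
  qed
  then show ?thesis unfolding e Gn_mult An_add_assoc by simp
qed

lemma Gn_closed: "x \<in> carrier (Gn n) \<Longrightarrow> y \<in> carrier (Gn n) \<Longrightarrow> x \<otimes>\<^bsub>Gn n\<^esub> y \<in> carrier (Gn n)"
  by (cases x; cases y) (auto simp: Gn_mult Gn_carrier An_add_def)

lemma Gn_one_closed: "\<one>\<^bsub>Gn n\<^esub> \<in> carrier (Gn n)"
  by (simp add: Gn_one Gn_carrier)

lemma Gn_carrierD:
  assumes "(c,a0,a) \<in> carrier (Gn n)"
  shows "\<And>i. i \<in> {1..n} \<Longrightarrow> 0 \<le> c i \<and> c i \<le> 2" "\<And>i. i \<notin> {1..n} \<Longrightarrow> c i = 0"
        "0 \<le> a0" "a0 \<le> 2"
        "\<And>i. i \<in> {1..n} \<Longrightarrow> 0 \<le> a i \<and> a i \<le> 8" "\<And>i. i \<notin> {1..n} \<Longrightarrow> a i = 0"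
  using assms unfolding Gn_carrier by (metis empty_iff insert_iff atLeastAtMost_iff)+


lemma Gn_l_one: "x \<in> carrier (Gn n) \<Longrightarrow> \<one>\<^bsub>Gn n\<^esub> \<otimes>\<^bsub>Gn n\<^esub> x = x"
proof -
  assume x: "x \<in> carrier (Gn n)"
  obtain c a0 a where xe: "x = (c,a0,a)" by (metis prod.exhaust)
  note h = Gn_carrierD[OF x[unfolded xe]]
  have 1: "(\<lambda>i. if i \<in> {1..n} then (0 + c i + theta n (0, \<lambda>_. 0) (a0, a) i) mod 3 else 0) = c"
  proof
    fix i show "(if i \<in> {1..n} then (0 + c i + theta n (0, \<lambda>_. 0) (a0, a) i) mod 3 else 0) = c i"
      using h(1)[of i] h(2)[of i] by (cases "i \<in> {1..n}") (auto simp: theta_def pi0_def)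
  qed
  have 2: "An_add n (0, \<lambda>_. 0) (a0,a) = (a0,a)"
  proof -
    have "(\<lambda>i. if i \<in> {1..n} then (0 + a i) mod 9 else 0) = a"
    proof
      fix i show "(if i \<in> {1..n} then (0 + a i) mod 9 else 0) = a i"
        using h(5)[of i] h(6)[of i] by (cases "i \<in> {1..n}") auto
    qed
    moreover have "(0 + a0) mod 3 = a0" using h(3,4) by simp
    ultimately show ?thesis unfolding An_add_def fst_conv snd_conv by simp
  qed
  show ?thesis unfolding xe Gn_one Gn_mult 1 2 by simp
qed

lemma Gn_l_inv_ex: "x \<in> carrier (Gn n) \<Longrightarrow> \<exists>y \<in> carrier (Gn n). y \<otimes>\<^bsub>Gn n\<^esub> x = \<one>\<^bsub>Gn n\<^esub>"
proof -
  assume x: "x \<in> carrier (Gn n)"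
  obtain c a0 a where xe: "x = (c,a0,a)" by (metis prod.exhaust)
  note h = Gn_carrierD[OF x[unfolded xe]]
  define b where "b = ((- a0) mod 3, (\<lambda>i. if i \<in> {1..n} then (- a i) mod 9 else 0))"
  define d where "d = (\<lambda>i. if i \<in> {1..n} then (- c i - theta n b (a0,a) i) mod 3 else 0)"
  have "(d, b) \<in> carrier (Gn n)" by (auto simp: d_def b_def Gn_carrier)
  moreover have "(d, b) \<otimes>\<^bsub>Gn n\<^esub> x = \<one>\<^bsub>Gn n\<^esub>"
  proof -
    have 1: "(\<lambda>i. if i \<in> {1..n} then (d i + c i + theta n b (a0, a) i) mod 3 else 0) = (\<lambda>_. 0)"
      by (auto simp: d_def inv_arith)
    have 2: "An_add n b (a0,a) = (0, \<lambda>_. 0)"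
      unfolding An_add_def b_def
      by (auto simp: mod_simps)
    show ?thesis unfolding xe Gn_one Gn_mult 1 2 by simp
  qed
  ultimately show ?thesis by blast
qed

lemma Gn_group: "group (Gn n)"
  by (rule groupI) (auto simp: Gn_closed Gn_one_closed Gn_l_one Gn_l_inv_ex Gn_assoc)



lemma An_add_zero:
  assumes "(c,a0,a) \<in> carrier (Gn n)"
  shows "An_add n (0, \<lambda>_. 0) (a0,a) = (a0,a)"
proof -
  note h = Gn_carrierD[OF assms]
  have "(\<lambda>i. if i \<in> {1..n} then (0 + a i) mod 9 else 0) = a"
  proof
    fix i show "(if i \<in> {1..n} then (0 + a i) mod 9 else 0) = a i"
      using h(5)[of i] h(6)[of i] by (cases "i \<in> {1..n}") auto
  qed
  moreover have "(0 + a0) mod 3 = a0" using h(3,4) by simp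
  ultimately show ?thesis unfolding An_add_def fst_conv snd_conv by simp
qed

lemma snd_mult: "snd (x \<otimes>\<^bsub>Gn n\<^esub> y) = An_add n (snd x) (snd y)"
  by (cases x; cases y) (simp add: Gn_mult)

lemma Gn_cube:
  assumes "(c,a0,a) \<in> carrier (Gn n)"
  shows "(c,a0,a) [^]\<^bsub>Gn n\<^esub> (3::nat) = ((\<lambda>_. 0), 0, (\<lambda>i. if i \<in> {1..n} then (3 * a i) mod 9 else 0))"
proof -
  interpret group "Gn n" by (rule Gn_group)
  have e: "(c,a0,a) [^]\<^bsub>Gn n\<^esub> (3::nat) = (c,a0,a) \<otimes>\<^bsub>Gn n\<^esub> (c,a0,a) \<otimes>\<^bsub>Gn n\<^esub> (c,a0,a)"
    using assms by (simp add: numeral_3_eq_3)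
  have t2: "((a0 + a0) mod 3 * a i) mod 3 = (2 * (a0 * a i)) mod 3" for i
  proof -
    have "((a0 + a0) mod 3 * a i) mod 3 = ((a0 + a0) * a i) mod 3" by (simp add: mod_mult_left_eq)
    also have "(a0 + a0) * a i = 2 * (a0 * a i)" by (simp add: algebra_simps)
    finally show ?thesis .
  qed
  have 1: "(\<lambda>i. if i \<in> {1..n} then ((if i \<in> {1..n} then (c i + c i + theta n (a0,a) (a0,a) i) mod 3 else 0)
            + c i + theta n (An_add n (a0,a) (a0,a)) (a0,a) i) mod 3 else 0) = (\<lambda>_. 0)"
  proof
    fix i show "(if i \<in> {1..n} then ((if i \<in> {1..n} then (c i + c i + theta n (a0,a) (a0,a) i) mod 3 else 0)
            + c i + theta n (An_add n (a0,a) (a0,a)) (a0,a) i) mod 3 else 0) = 0"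
    proof (cases "i \<in> {1..n}")
      case True
      have "theta n (An_add n (a0,a) (a0,a)) (a0,a) i = (2 * (a0 * a i)) mod 3"
        using True by (simp only: theta_eq An_add_def t2 fst_conv snd_conv)
      moreover have "theta n (a0,a) (a0,a) i = (a0 * a i) mod 3" using True by (simp add: theta_eq)
      ultimately show ?thesis using True cube_arith by simp
    next
      case False
      show ?thesis by (subst if_not_P[OF False]) (rule refl)
    qed
  qed
  have 2: "An_add n (An_add n (a0,a) (a0,a)) (a0,a) = (0, (\<lambda>i. if i \<in> {1..n} then (3 * a i) mod 9 else 0))"
    by (auto simp: An_add_def mod_simps intro!: ext)
  show ?thesis unfolding e Gn_mult 1 2 by simp
qed

lemma snd_pow:
  assumes "(c,a0,a) \<in> carrier (Gn n)"
  shows "snd ((c,a0,a) [^]\<^bsub>Gn n\<^esub> (k::nat)) = ((int k * a0) mod 3, (\<lambda>i. if i \<in> {1..n} then (int k * a i) mod 9 else 0))"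
proof (induction k)
  case 0
  then show ?case by (simp add: Gn_one fun_eq_iff)
next
  case (Suc k)
  interpret group "Gn n" by (rule Gn_group)
  have "snd ((c,a0,a) [^]\<^bsub>Gn n\<^esub> Suc k) = An_add n (snd ((c,a0,a) [^]\<^bsub>Gn n\<^esub> k)) (a0,a)"
    by (simp add: snd_mult)
  also have "\<dots> = ((int (Suc k) * a0) mod 3, (\<lambda>i. if i \<in> {1..n} then (int (Suc k) * a i) mod 9 else 0))"
    unfolding Suc by (auto simp: An_add_def mod_simps algebra_simps intro!: ext)
  finally show ?case .
qed

lemma Gn_comm_iff:
  "(ch,h0,ha) \<otimes>\<^bsub>Gn n\<^esub> (cg,g0,ga) = (cg,g0,ga) \<otimes>\<^bsub>Gn n\<^esub> (ch,h0,ha) \<longleftrightarrow>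
    (\<forall>i\<in>{1..n}. (h0 * ga i) mod 3 = (g0 * ha i) mod 3)"
proof -
  have "(ch,h0,ha) \<otimes>\<^bsub>Gn n\<^esub> (cg,g0,ga) = (cg,g0,ga) \<otimes>\<^bsub>Gn n\<^esub> (ch,h0,ha) \<longleftrightarrow>
    (\<forall>i\<in>{1..n}. (ch i + cg i + theta n (h0,ha) (g0,ga) i) mod 3 = (cg i + ch i + theta n (g0,ga) (h0,ha) i) mod 3)"
    unfolding Gn_mult by (auto simp: An_add_comm fun_eq_iff)
  also have "\<dots> \<longleftrightarrow> (\<forall>i\<in>{1..n}. (h0 * ga i) mod 3 = (g0 * ha i) mod 3)"
    by (intro ball_cong refl, subst comm_arith) (auto simp: theta_eq)
  finally show ?thesis .
qed



definition FF :: "nat \<Rightarrow> (nat \<Rightarrow> int set) \<Rightarrow> (nat \<Rightarrow> int) set" where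
  "FF n S = {f. \<forall>i. f i \<in> (if i \<in> {1..n} then S i else {0})}"

lemma card_FF:
  assumes "\<And>i. i \<in> {1..n} \<Longrightarrow> finite (S i)"
  shows "card (FF n S) = (\<Prod>i\<in>{1..n}. card (S i))"
proof -
  let ?e = "\<lambda>g i. if i \<in> {1..n} then g i else (0::int)"
  have "FF n S = ?e ` PiE {1..n} S"
  proof (rule subset_antisym; rule subsetI)
    fix f assume f: "f \<in> FF n S"
    have fi: "\<forall>i. f i \<in> (if i \<in> {1..n} then S i else {0})" using f unfolding FF_def by blast
    have "restrict f {1..n} \<in> PiE {1..n} S"
    proof (rule restrict_PiE_iff[THEN iffD2], intro ballI)
      fix i assume i: "i \<in> {1..n}"
      show "f i \<in> S i" using fi[rule_format, of i] by (simp only: if_P[OF i])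
    qed
    moreover have "f = ?e (restrict f {1..n})"
    proof
      fix i show "f i = ?e (restrict f {1..n}) i"
      proof (cases "i \<in> {1..n}")
        case True then show ?thesis by simp
      next
        case False then show ?thesis using fi[rule_format, of i] by (simp only: if_not_P[OF False] restrict_def) simp
      qed
    qed
    ultimately show "f \<in> ?e ` PiE {1..n} S" by blast
  next
    fix f assume "f \<in> ?e ` PiE {1..n} S"
    then show "f \<in> FF n S" by (auto simp: FF_def PiE_def)
  qed
  moreover have "inj_on ?e (PiE {1..n} S)"
  proof
    fix x y assume x: "x \<in> PiE {1..n} S" and y: "y \<in> PiE {1..n} S" and e: "?e x = ?e y"
    show "x = y"
    proof (rule PiE_ext[OF x y])
      fix i assume "i \<in> {1..n}" then show "x i = y i" using fun_cong[OF e, of i] by simp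
    qed
  qed
  ultimately show ?thesis using card_PiE[of "{1..n}" S] assms by (simp add: card_image)
qed

lemma Gn_carrier_FF: "carrier (Gn n) = FF n (\<lambda>_. {0..2}) \<times> ({0..2} \<times> FF n (\<lambda>_. {0..8}))"
  by (auto simp: Gn_def An_carrier_def FF_def)

lemma card_FF_2: "card (FF n (\<lambda>_. {0..2})) = 3 ^ n"
  by (simp add: card_FF)

lemma card_FF_8: "card (FF n (\<lambda>_. {0..8})) = 9 ^ n"
  by (simp add: card_FF)

lemma FF_mem: "a \<in> FF n S \<longleftrightarrow> (\<forall>i\<in>{1..n}. a i \<in> S i) \<and> (\<forall>i. i \<notin> {1..n} \<longrightarrow> a i = 0)"
  unfolding FF_def by (auto split: if_splits)

lemma FF_finite: "card (FF n S) > 0 \<Longrightarrow> finite (FF n S)"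
  using card_gt_0_iff by blast

lemma div9: "(d::nat) dvd 9 \<Longrightarrow> d = 1 \<or> d = 3 \<or> d = 9"
proof -
  assume "d dvd 9"
  moreover have "d \<le> 9" using calculation by (simp add: dvd_imp_le)
  then have "d = 0 \<or> d = 1 \<or> d = 2 \<or> d = 3 \<or> d = 4 \<or> d = 5 \<or> d = 6 \<or> d = 7 \<or> d = 8 \<or> d = 9" by arith
  then show ?thesis using \<open>d dvd 9\<close> by (elim disjE; simp)
qed



theorem mainTheorem7:
  fixes n :: nat and g :: gelem
  assumes "n \<ge> 1" and "g \<in> carrier (Gn n)"
  shows "(qn g = An_zero \<and> g \<noteq> \<one>\<^bsub>Gn n\<^esub> \<longrightarrow>
            group.ord (Gn n) g = 3 \<and>
            (\<forall>\<alpha>::int. coprime \<alpha> (int (group.ord (Gn n) g)) \<longrightarrow>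
               Sset n g \<alpha> = (if \<alpha> mod 3 = 1 then carrier (Gn n) else {})))
       \<and> (qn g \<noteq> An_zero \<longrightarrow>
            (\<forall>\<alpha>::int. coprime \<alpha> (int (group.ord (Gn n) g)) \<longrightarrow>
               \<alpha> mod int (group.ord (Gn n) g) \<noteq> 1 mod int (group.ord (Gn n) g) \<longrightarrow> Sset n g \<alpha> = {})
          \<and> (pi0 (qn g) \<noteq> 0 \<longrightarrow> card (Sset n g 1) = 3 * 9 ^ n)
          \<and> (pi0 (qn g) = 0 \<and> (\<exists>i\<in>{1..n}. pii i (qn g) \<noteq> 0) \<longrightarrow> card (Sset n g 1) = 27 ^ n)
          \<and> (pi0 (qn g) = 0 \<and> (\<forall>i\<in>{1..n}. pii i (qn g) = 0) \<longrightarrow> card (Sset n g 1) = 3 * 27 ^ n))"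
proof -
  interpret G: group "Gn n" by (rule Gn_group)
  obtain cg g0 ga where ge: "g = (cg, g0, ga)" by (metis prod.exhaust)
  have gc: "(cg,g0,ga) \<in> carrier (Gn n)" using assms(2) ge by simp
  note gh = Gn_carrierD[OF gc]
  have qg: "qn g = (g0, ga)" by (simp add: ge qn_def)
  have conj_iff: "h \<otimes>\<^bsub>Gn n\<^esub> g \<otimes>\<^bsub>Gn n\<^esub> inv\<^bsub>Gn n\<^esub> h = g \<longleftrightarrow> h \<otimes>\<^bsub>Gn n\<^esub> g = g \<otimes>\<^bsub>Gn n\<^esub> h"
    if h: "h \<in> carrier (Gn n)" for h
  proof
    assume e: "h \<otimes>\<^bsub>Gn n\<^esub> g \<otimes>\<^bsub>Gn n\<^esub> inv\<^bsub>Gn n\<^esub> h = g"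
    have "h \<otimes>\<^bsub>Gn n\<^esub> g = h \<otimes>\<^bsub>Gn n\<^esub> g \<otimes>\<^bsub>Gn n\<^esub> inv\<^bsub>Gn n\<^esub> h \<otimes>\<^bsub>Gn n\<^esub> h"
      using h assms(2) by (simp add: G.m_assoc)
    then show "h \<otimes>\<^bsub>Gn n\<^esub> g = g \<otimes>\<^bsub>Gn n\<^esub> h" using e by simp
  next
    assume e: "h \<otimes>\<^bsub>Gn n\<^esub> g = g \<otimes>\<^bsub>Gn n\<^esub> h"
    show "h \<otimes>\<^bsub>Gn n\<^esub> g \<otimes>\<^bsub>Gn n\<^esub> inv\<^bsub>Gn n\<^esub> h = g"
      using h assms(2) by (simp add: e G.m_assoc)
  qed
  have cube: "g [^]\<^bsub>Gn n\<^esub> (3::nat) = ((\<lambda>_. 0), 0, (\<lambda>i. if i \<in> {1..n} then (3 * ga i) mod 9 else 0))"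
    using Gn_cube[OF gc] ge by simp
  have cube_c: "g [^]\<^bsub>Gn n\<^esub> (3::nat) \<in> carrier (Gn n)" using assms(2) by simp
  have pow9: "g [^]\<^bsub>Gn n\<^esub> (9::nat) = \<one>\<^bsub>Gn n\<^esub>"
  proof -
    have "g [^]\<^bsub>Gn n\<^esub> (9::nat) = (g [^]\<^bsub>Gn n\<^esub> (3::nat)) [^]\<^bsub>Gn n\<^esub> (3::nat)"
      using assms(2) by (simp add: G.nat_pow_pow)
    also have "\<dots> = ((\<lambda>_. 0), 0, (\<lambda>i. if i \<in> {1..n} then (3 * (if i \<in> {1..n} then (3 * ga i) mod 9 else 0)) mod 9 else 0))"
      using Gn_cube[OF cube_c[unfolded cube]] cube by simp
    also have "\<dots> = \<one>\<^bsub>Gn n\<^esub>" by (auto simp: Gn_one fun_eq_iff mod_simps)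
    finally show ?thesis .
  qed
  define d where "d = group.ord (Gn n) g"
  have d9: "d dvd 9" using pow9 G.pow_eq_id[OF assms(2)] d_def by simp
  have dpos: "d > 0" using d9 by (cases d) auto
  have d3: "d dvd 3 \<longleftrightarrow> g [^]\<^bsub>Gn n\<^esub> (3::nat) = \<one>\<^bsub>Gn n\<^esub>" using G.pow_eq_id[OF assms(2)] d_def by simp
  have d1: "d = 1 \<longleftrightarrow> g = \<one>\<^bsub>Gn n\<^esub>" using G.ord_eq_1[OF assms(2)] d_def by simp
  have powr: "g [^]\<^bsub>Gn n\<^esub> \<alpha> = g [^]\<^bsub>Gn n\<^esub> (nat (\<alpha> mod int d))" for \<alpha> :: int
  proof -
    have "g [^]\<^bsub>Gn n\<^esub> \<alpha> = g [^]\<^bsub>Gn n\<^esub> (\<alpha> mod int d)"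
      using G.int_pow_eq[OF assms(2)] d_def by (simp add: mod_eq_dvd_iff[symmetric]) 
    also have "\<dots> = g [^]\<^bsub>Gn n\<^esub> (int (nat (\<alpha> mod int d)))" using dpos by simp
    finally show ?thesis by (simp add: int_pow_int)
  qed
  have dd: "d = 1 \<or> d = 3 \<or> d = 9" using div9[OF d9] .
  have Sset_eq: "Sset n g \<alpha> = {h \<in> carrier (Gn n). h \<otimes>\<^bsub>Gn n\<^esub> g \<otimes>\<^bsub>Gn n\<^esub> inv\<^bsub>Gn n\<^esub> h = g [^]\<^bsub>Gn n\<^esub> \<alpha>}" for \<alpha>
    by (simp add: Sset_def)
  have part1: "qn g = An_zero \<and> g \<noteq> \<one>\<^bsub>Gn n\<^esub> \<longrightarrow> d = 3 \<and>
            (\<forall>\<alpha>::int. coprime \<alpha> (int d) \<longrightarrow>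
               Sset n g \<alpha> = (if \<alpha> mod 3 = 1 then carrier (Gn n) else {}))"
  proof (intro impI)
    assume a: "qn g = An_zero \<and> g \<noteq> \<one>\<^bsub>Gn n\<^esub>"
    then have g0: "g0 = 0" and ga: "ga = (\<lambda>_. 0)" using qg by (auto simp: An_zero_def)
    have "g [^]\<^bsub>Gn n\<^esub> (3::nat) = \<one>\<^bsub>Gn n\<^esub>" unfolding cube ga by (simp add: Gn_one fun_eq_iff)
    then have "d dvd 3" using d3 by simp
    then have d3': "d = 3" using dd d1 a by auto
    have central: "h \<otimes>\<^bsub>Gn n\<^esub> g = g \<otimes>\<^bsub>Gn n\<^esub> h" for h
    proof -
      obtain ch h0 ha where "h = (ch,h0,ha)" by (metis prod.exhaust)
      then show ?thesis unfolding ge g0 ga by (simp only: Gn_comm_iff) simp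
    qed
    have pw: "g [^]\<^bsub>Gn n\<^esub> \<alpha> = g \<longleftrightarrow> \<alpha> mod 3 = 1" for \<alpha> :: int
    proof -
      have "g [^]\<^bsub>Gn n\<^esub> \<alpha> = g \<longleftrightarrow> g [^]\<^bsub>Gn n\<^esub> (1::int) = g [^]\<^bsub>Gn n\<^esub> \<alpha>"
        using assms(2) by auto
      also have "\<dots> \<longleftrightarrow> int 3 dvd \<alpha> - 1" using G.int_pow_eq[OF assms(2)] d_def d3' by simp
      also have "\<dots> \<longleftrightarrow> \<alpha> mod 3 = 1" by (rule dvd3)
      finally show ?thesis .
    qed
    show "d = 3 \<and> (\<forall>\<alpha>::int. coprime \<alpha> (int d) \<longrightarrow>
               Sset n g \<alpha> = (if \<alpha> mod 3 = 1 then carrier (Gn n) else {}))"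
    proof (intro conjI allI impI d3')
      fix \<alpha> :: int
      show "Sset n g \<alpha> = (if \<alpha> mod 3 = 1 then carrier (Gn n) else {})"
      proof -
        have pw': "(g = g [^]\<^bsub>Gn n\<^esub> \<alpha>) = (\<alpha> mod 3 = 1)" using pw[of \<alpha>] by auto
        have "h \<otimes>\<^bsub>Gn n\<^esub> g \<otimes>\<^bsub>Gn n\<^esub> inv\<^bsub>Gn n\<^esub> h = g" if "h \<in> carrier (Gn n)" for h
          using conj_iff[OF that] central[of h] by simp
        then show ?thesis unfolding Sset_eq using pw' by auto
      qed
    qed
  qed
  have qconj: "snd (h \<otimes>\<^bsub>Gn n\<^esub> g \<otimes>\<^bsub>Gn n\<^esub> inv\<^bsub>Gn n\<^esub> h) = (g0, ga)" if h: "h \<in> carrier (Gn n)" for h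
  proof -
    have "An_add n (snd h) (snd (inv\<^bsub>Gn n\<^esub> h)) = snd (h \<otimes>\<^bsub>Gn n\<^esub> inv\<^bsub>Gn n\<^esub> h)"
      by (simp add: snd_mult)
    also have "\<dots> = (0, \<lambda>_. 0)" using h by (simp add: Gn_one)
    finally have hi: "An_add n (snd h) (snd (inv\<^bsub>Gn n\<^esub> h)) = (0, \<lambda>_. 0)" .
    have "snd (h \<otimes>\<^bsub>Gn n\<^esub> g \<otimes>\<^bsub>Gn n\<^esub> inv\<^bsub>Gn n\<^esub> h) = An_add n (An_add n (snd h) (g0,ga)) (snd (inv\<^bsub>Gn n\<^esub> h))"
      by (simp add: snd_mult ge)
    also have "\<dots> = An_add n (g0,ga) (An_add n (snd h) (snd (inv\<^bsub>Gn n\<^esub> h)))"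
      by (simp only: An_add_comm[of n "snd h" "(g0,ga)"] An_add_assoc)
    also have "\<dots> = (g0, ga)" unfolding hi using An_add_zero[OF gc] by (simp add: An_add_comm)
    finally show ?thesis .
  qed
  have part2a: "qn g \<noteq> An_zero \<longrightarrow> (\<forall>\<alpha>::int. coprime \<alpha> (int d) \<longrightarrow>
               \<alpha> mod int d \<noteq> 1 mod int d \<longrightarrow> Sset n g \<alpha> = {})"
  proof (intro impI allI)
    fix \<alpha> :: int
    assume qnz: "qn g \<noteq> An_zero" and cop: "coprime \<alpha> (int d)" and am: "\<alpha> mod int d \<noteq> 1 mod int d"
    have gne: "g \<noteq> \<one>\<^bsub>Gn n\<^esub>" using qnz by (auto simp: qn_def Gn_one An_zero_def)
    then have dd': "d = 3 \<or> d = 9" using dd d1 by auto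
    define r where "r = nat (\<alpha> mod int d)"
    have m1: "\<alpha> mod int d < int d" "0 \<le> \<alpha> mod int d" using dpos by simp_all
    have rlt: "r < d" unfolding r_def using m1 by (simp add: nat_less_iff)
    have rint: "int r = \<alpha> mod int d" using dpos by (simp add: r_def)
    show "Sset n g \<alpha> = {}"
    proof (rule ccontr)
      assume "Sset n g \<alpha> \<noteq> {}"
      then obtain h where h: "h \<in> carrier (Gn n)" "h \<otimes>\<^bsub>Gn n\<^esub> g \<otimes>\<^bsub>Gn n\<^esub> inv\<^bsub>Gn n\<^esub> h = g [^]\<^bsub>Gn n\<^esub> \<alpha>"
        unfolding Sset_eq by blast
      have "(g0, ga) = snd (g [^]\<^bsub>Gn n\<^esub> r)" using qconj[OF h(1)] h(2) powr r_def by simp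
      also have "\<dots> = ((int r * g0) mod 3, (\<lambda>i. if i \<in> {1..n} then (int r * ga i) mod 9 else 0))"
        using snd_pow[OF gc] ge by simp
      finally have e0: "(int r * g0) mod 3 = g0" and
        ei: "\<And>i. i \<in> {1..n} \<Longrightarrow> (int r * ga i) mod 9 = ga i"
        by (auto simp: fun_eq_iff) (metis atLeastAtMost_iff)
      have "r = 1"
      proof (cases "d = 9")
        case True
        then have "g [^]\<^bsub>Gn n\<^esub> (3::nat) \<noteq> \<one>\<^bsub>Gn n\<^esub>" using d3 by auto
        then obtain i where i: "i \<in> {1..n}" "(3 * ga i) mod 9 \<noteq> 0"
          unfolding cube by (auto simp: Gn_one fun_eq_iff split: if_splits)
        show ?thesis using arith9[of "ga i" r] gh(5)[OF i(1)] i(2) ei[OF i(1)] rlt True by simp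
      next
        case False
        then have d3'': "d = 3" using dd' by simp
        then have "g [^]\<^bsub>Gn n\<^esub> (3::nat) = \<one>\<^bsub>Gn n\<^esub>" using d3 by auto
        show ?thesis
        proof (cases "g0 = 0")
          case False
          then show ?thesis using arith3b[of g0 r] gh(3,4) e0 rlt d3'' by simp
        next
          case True
          then obtain i where "ga i \<noteq> 0" using qnz qg by (auto simp: An_zero_def)
          then have i: "i \<in> {1..n}" "ga i \<noteq> 0" using gh(6) by auto
          show ?thesis using arith3a[of "ga i" r] gh(5)[OF i(1)] i(2) ei[OF i(1)] rlt d3'' by simp
        qed
      qed
      then have "\<alpha> mod int d = 1" using rint by simp
      moreover have "1 mod int d = 1" using dd' by auto
      ultimately show False using am by simp
    qed
  qed
  have cent: "Sset n g 1 = {h \<in> carrier (Gn n). h \<otimes>\<^bsub>Gn n\<^esub> g = g \<otimes>\<^bsub>Gn n\<^esub> h}"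
    unfolding Sset_eq using conj_iff G.int_pow_1[OF assms(2)] by auto
  have cent2: "Sset n g 1 = {(c,a0,a). c \<in> FF n (\<lambda>_. {0..2}) \<and> a0 \<in> {0..2} \<and> a \<in> FF n (\<lambda>_. {0..8}) \<and>
        (\<forall>i\<in>{1..n}. (a0 * ga i) mod 3 = (g0 * a i) mod 3)}"
    unfolding cent unfolding Gn_carrier_FF ge by (auto simp: Gn_comm_iff)
  have c2: "card (FF n (\<lambda>_. {0..2})) = 3 ^ n" by (rule card_FF_2)
  have c8: "card (FF n (\<lambda>_. {0..8})) = 9 ^ n" by (rule card_FF_8)
  have p0: "pi0 (qn g) = g0" using gh(3,4) by (simp add: qg pi0_def)
  have pi: "pii i (qn g) = ga i mod 3" for i by (simp add: qg pii_def)
  have cardA: "pi0 (qn g) \<noteq> 0 \<longrightarrow> card (Sset n g 1) = 3 * 9 ^ n"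
  proof
    assume "pi0 (qn g) \<noteq> 0"
    then have g: "g0 = 1 \<or> g0 = 2" using p0 gh(3,4) by auto
    define B where "B = (\<lambda>a0. FF n (\<lambda>i. {x \<in> {0..8::int}. x mod 3 = (a0 * ga i * g0) mod 3}))"
    have cB: "card (B a0) = 3 ^ n" for a0
    proof -
      have "card (B a0) = (\<Prod>i\<in>{1..n}. card {x \<in> {0..8::int}. x mod 3 = (a0 * ga i * g0) mod 3})"
        unfolding B_def by (rule card_FF, rule finite_subset[OF _ finite_atLeastAtMost_int[of 0 8]]) blast
      also have "\<dots> = (\<Prod>i\<in>{1..n}. 3)" by (simp only: card_mod3)
      finally show ?thesis by simp
    qed
    have key: "(a \<in> FF n (\<lambda>_. {0..8}) \<and> (\<forall>i\<in>{1..n}. (a0 * ga i) mod 3 = (g0 * a i) mod 3)) \<longleftrightarrow> a \<in> B a0"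
      for a0 and a :: "nat \<Rightarrow> int"
      unfolding B_def FF_mem by (auto simp: cond_iff[OF g])
    have "Sset n g 1 = FF n (\<lambda>_. {0..2}) \<times> (SIGMA a0:{0..2}. B a0)"
      unfolding cent2
    proof (rule Set.set_eqI)
      fix x :: gelem
      obtain c a0 a where x: "x = (c,a0,a)" by (metis prod.exhaust)
      show "x \<in> {(c,a0,a). c \<in> FF n (\<lambda>_. {0..2}) \<and> a0 \<in> {0..2} \<and> a \<in> FF n (\<lambda>_. {0..8}) \<and>
          (\<forall>i\<in>{1..n}. (a0 * ga i) mod 3 = (g0 * a i) mod 3)} \<longleftrightarrow> x \<in> FF n (\<lambda>_. {0..2}) \<times> (SIGMA a0:{0..2}. B a0)"
        unfolding x using key[of a a0] by auto
    qed
    moreover have fB: "finite (B a0)" for a0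
    proof -
      have "card (B a0) > 0" using cB by simp
      then show ?thesis using card_gt_0_iff by blast
    qed
    moreover have "card (Sigma {0..2::int} B) = (\<Sum>a0\<in>{0..2::int}. card (B a0))"
      using fB by (intro card_SigmaI) auto
    ultimately have "card (Sset n g 1) = 3 ^ n * (\<Sum>a0\<in>{0..2::int}. card (B a0))"
      using c2 by (simp add: card_cartesian_product)
    also have "\<dots> = 3 * 9 ^ n" by (simp add: cB power_mult_distrib[symmetric])
    finally show "card (Sset n g 1) = 3 * 9 ^ n" .
  qed
  have cardB: "pi0 (qn g) = 0 \<and> (\<exists>i\<in>{1..n}. pii i (qn g) \<noteq> 0) \<longrightarrow> card (Sset n g 1) = 27 ^ n"
  proof
    assume a: "pi0 (qn g) = 0 \<and> (\<exists>i\<in>{1..n}. pii i (qn g) \<noteq> 0)"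
    then have g0: "g0 = 0" using p0 by simp
    obtain j where j: "j \<in> {1..n}" "ga j mod 3 \<noteq> 0" using a pi by auto
    have "Sset n g 1 = FF n (\<lambda>_. {0..2}) \<times> ({0} \<times> FF n (\<lambda>_. {0..8}))"
    proof -
      have key: "(\<forall>i\<in>{1..n}. (a0 * ga i) mod 3 = (0 * a i) mod 3) \<longleftrightarrow> a0 = 0" if "a0 \<in> {0..2}" for a0 and a :: "nat \<Rightarrow> int"
        using nonzero_prod[OF that, of "ga j"] j by auto
      show ?thesis unfolding cent2 g0
      proof (rule Set.set_eqI)
        fix x :: gelem
        obtain c a0 a where x: "x = (c,a0,a)" by (metis prod.exhaust)
        show "x \<in> {(c,a0,a). c \<in> FF n (\<lambda>_. {0..2}) \<and> a0 \<in> {0..2} \<and> a \<in> FF n (\<lambda>_. {0..8}) \<and>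
          (\<forall>i\<in>{1..n}. (a0 * ga i) mod 3 = (0 * a i) mod 3)} \<longleftrightarrow> x \<in> FF n (\<lambda>_. {0..2}) \<times> ({0} \<times> FF n (\<lambda>_. {0..8}))"
          unfolding x using key[of a0 a] by auto
      qed
    qed
    then have "card (Sset n g 1) = 3 ^ n * 9 ^ n" using c2 c8 by (simp add: card_cartesian_product)
    also have "\<dots> = 27 ^ n" by (simp add: power_mult_distrib[symmetric])
    finally show "card (Sset n g 1) = 27 ^ n" .
  qed
  have cardC: "pi0 (qn g) = 0 \<and> (\<forall>i\<in>{1..n}. pii i (qn g) = 0) \<longrightarrow> card (Sset n g 1) = 3 * 27 ^ n"
  proof
    assume a: "pi0 (qn g) = 0 \<and> (\<forall>i\<in>{1..n}. pii i (qn g) = 0)"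
    then have g0: "g0 = 0" using p0 by simp
    have z: "\<forall>i\<in>{1..n}. ga i mod 3 = 0" using a pi by auto
    have "Sset n g 1 = FF n (\<lambda>_. {0..2}) \<times> ({0..2} \<times> FF n (\<lambda>_. {0..8}))"
    proof -
      have key: "\<forall>i\<in>{1..n}. (a0 * ga i) mod 3 = (0 * a i) mod 3" for a0 and a :: "nat \<Rightarrow> int"
        using zero_prod z by simp
      show ?thesis unfolding cent2 g0 using key by auto
    qed
    then have "card (Sset n g 1) = 3 ^ n * (3 * 9 ^ n)" using c2 c8 by (simp add: card_cartesian_product)
    also have "\<dots> = 3 * 27 ^ n" by (simp add: power_mult_distrib[symmetric])
    finally show "card (Sset n g 1) = 3 * 27 ^ n" .
  qed
  show ?thesis unfolding d_def[symmetric] using part1 part2a cardA cardB cardC by blast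
qed


end
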